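(* Let $p\ne5$ be an odd prime. Then $$\sum_{k=1}^{[\frac{p+1}4]}\binom{4k-2}{2k-1}\frac1{20^k}\equiv\begin{cases}0\pmod p&\text{if }p\equiv\pm1\pmod5,\\ \mp(-1)^{\frac{p-1}2}\frac12\pmod p&\text{if }p\equiv\pm2\pmod5.\end{cases}$$
   Context: $[x]$ is the greatest integer $\le x$. *)

theory Defs
  imports "HOL-Number_Theory.Number_Theory"
begin

text \<open>Congruence of rationals modulo an integer p: x - y = a/b with p | a and
  b coprime to p (i.e. x - y is a p-integral rational divisible by p).\<close>
definition rat_cong :: "rat \<Rightarrow> rat \<Rightarrow> int \<Rightarrow> bool" where
  "rat_cong x y p \<longleftrightarrow> (\<exists>a b. b \<noteq> 0 \<and> coprime b p \<and> p dvd a \<and> x - y = of_int a / of_int b)"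

end

theory Submission
  imports Defs
begin


datatype zz = Z int int int int

instantiation zz :: comm_ring_1
begin
definition "zero_zz = Z 0 0 0 0"
definition "one_zz = Z 1 0 0 0"
fun plus_zz where "Z a0 a1 a2 a3 + Z b0 b1 b2 b3 = Z (a0+b0) (a1+b1) (a2+b2) (a3+b3)"
fun minus_zz where "Z a0 a1 a2 a3 - Z b0 b1 b2 b3 = Z (a0-b0) (a1-b1) (a2-b2) (a3-b3)"
fun uminus_zz where "- Z a0 a1 a2 a3 = Z (-a0) (-a1) (-a2) (-a3)"
fun times_zz where "Z a0 a1 a2 a3 * Z b0 b1 b2 b3 =
  Z (a0*b0 - (a1*b3+a2*b2+a3*b1) + (a2*b3+a3*b2))
    (a0*b1+a1*b0 - (a1*b3+a2*b2+a3*b1) + a3*b3)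
    (a0*b2+a1*b1+a2*b0 - (a1*b3+a2*b2+a3*b1))
    (a0*b3+a1*b2+a2*b1+a3*b0 - (a1*b3+a2*b2+a3*b1))"
instance
proof
  fix a b c :: zz
  show "a * b * c = a * (b * c)" by (cases a; cases b; cases c) (simp add: algebra_simps)
  show "a * b = b * a" by (cases a; cases b) (simp add: algebra_simps)
  show "1 * a = a" by (cases a) (simp add: one_zz_def)
  show "(a + b) * c = a * c + b * c" by (cases a; cases b; cases c) (simp add: algebra_simps)
  show "a + b + c = a + (b + c)" by (cases a; cases b; cases c) simp
  show "a + b = b + a" by (cases a; cases b) simp
  show "0 + a = a" by (cases a) (simp add: zero_zz_def)
  show "- a + a = 0" by (cases a) (simp add: zero_zz_def)
  show "a - b = a + - b" by (cases a; cases b) simp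
  show "(0::zz) \<noteq> 1" by (simp add: zero_zz_def one_zz_def)
qed
end

lemma of_nat_zz: "(of_nat n :: zz) = Z (int n) 0 0 0"
  by (induction n) (simp_all add: zero_zz_def one_zz_def)

lemma of_int_zz: "(of_int n :: zz) = Z n 0 0 0"
  by (cases n) (simp_all add: of_nat_zz one_zz_def)


definition mc :: "int \<Rightarrow> 'a::comm_ring_1 \<Rightarrow> 'a \<Rightarrow> bool" where
  "mc p u v \<longleftrightarrow> (\<exists>q. u - v = of_int p * q)"

lemma mc_refl: "mc p u u" unfolding mc_def by (rule exI[of _ 0]) simp
lemma mc_sym: "mc p u v \<Longrightarrow> mc p v u"
  unfolding mc_def by (metis minus_diff_eq mult_minus_right)
lemma mc_trans: "mc p u v \<Longrightarrow> mc p v w \<Longrightarrow> mc p u w"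
  unfolding mc_def by (metis diff_add_cancel add_diff_eq distrib_left)
lemma mc_add: "mc p u v \<Longrightarrow> mc p u' v' \<Longrightarrow> mc p (u + u') (v + v')"
proof -
  assume "mc p u v" "mc p u' v'"
  then obtain q q' where "u - v = of_int p * q" "u' - v' = of_int p * q'" unfolding mc_def by blast
  then have "(u + u') - (v + v') = of_int p * (q + q')" by (simp add: algebra_simps)
  then show ?thesis unfolding mc_def by blast
qed
lemma mc_neg: "mc p u v \<Longrightarrow> mc p (- u) (- v)"
  unfolding mc_def by (metis minus_diff_minus mult_minus_right)
lemma mc_diff: "mc p u v \<Longrightarrow> mc p u' v' \<Longrightarrow> mc p (u - u') (v - v')"
  using mc_add[of p u v "-u'" "-v'"] mc_neg by (simp add: mc_neg)
lemma mc_mult: "mc p u v \<Longrightarrow> mc p u' v' \<Longrightarrow> mc p (u * u') (v * v')"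
proof -
  assume "mc p u v" "mc p u' v'"
  then obtain q q' where 1: "u - v = of_int p * q" and 2: "u' - v' = of_int p * q'" unfolding mc_def by blast
  have "u * u' - v * v' = (u - v) * u' + v * (u' - v')" by (simp add: algebra_simps)
  also have "\<dots> = of_int p * (q * u' + v * q')" using 1 2 by (simp add: algebra_simps)
  finally show ?thesis unfolding mc_def by blast
qed
lemma mc_power: "mc p u v \<Longrightarrow> mc p (u ^ n) (v ^ n)"
  by (induction n) (simp_all add: mc_refl mc_mult)

lemma mc_frob_add:
  assumes "prime (p::nat)"
  shows "mc (int p) ((a + b) ^ p) (a ^ p + b ^ p :: 'a::comm_ring_1)"
proof -
  have p0: "p \<noteq> 0" and p1: "0 < p" using assms prime_gt_0_nat by auto
  define f where "f k = of_nat (p choose k) * a ^ k * b ^ (p - k)" for k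
  have "(a + b) ^ p = (\<Sum>k\<le>p. f k)" unfolding f_def by (rule binomial_ring)
  also have "{..p} = insert 0 (insert p {1..<p})" using p1 by auto
  also have "(\<Sum>k\<in>insert 0 (insert p {1..<p}). f k) = f 0 + (f p + (\<Sum>k\<in>{1..<p}. f k))"
    using p1 by (simp add: sum.insert)
  also have "(\<Sum>k\<in>{1..<p}. f k) = of_int (int p) * (\<Sum>k\<in>{1..<p}. of_nat ((p choose k) div p) * a ^ k * b ^ (p - k))"
    unfolding sum_distrib_left
  proof (rule sum.cong)
    fix k assume "k \<in> {1..<p}"
    then have "p dvd (p choose k)" using dvd_choose_prime[of k p] assms p0 by auto
    then have "p choose k = p * ((p choose k) div p)" by simp
    then have "(of_nat (p choose k) :: 'a) = of_nat p * of_nat ((p choose k) div p)"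
      by (metis of_nat_mult)
    then show "f k = of_int (int p) * (of_nat ((p choose k) div p) * a ^ k * b ^ (p - k))"
      unfolding f_def by (simp add: algebra_simps)
  qed simp
  finally have "(a + b) ^ p - (a ^ p + b ^ p) = of_int (int p) * (\<Sum>k\<in>{1..<p}. of_nat ((p choose k) div p) * a ^ k * b ^ (p - k))"
    unfolding f_def using p1 by simp
  then show ?thesis unfolding mc_def by blast
qed

lemma mc_frob_diff:
  assumes "prime (p::nat)" "odd p"
  shows "mc (int p) ((a - b) ^ p) (a ^ p - b ^ p :: 'a::comm_ring_1)"
  using mc_frob_add[OF assms(1), of a "-b"] assms(2) by (simp add: power_minus_odd)

lemma int_fermat:
  assumes "prime (p::nat)"
  shows "int p dvd int a ^ p - int a"
proof (cases "p dvd a")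
  case True
  then have "int p dvd int a" by simp
  moreover have "int p dvd int a ^ p" using True prime_gt_0_nat[OF assms]
    by (metis dvd_power dvd_trans of_nat_dvd_iff)
  ultimately show ?thesis by (simp add: dvd_diff)
next
  case False
  then have "[a ^ (p - 1) = 1] (mod p)" using fermat_theorem assms by blast
  then have "[a ^ (p - 1) * a = 1 * a] (mod p)" by (rule cong_mult) simp
  moreover have "a ^ (p - 1) * a = a ^ p" using prime_gt_0_nat[OF assms]
    by (metis Suc_diff_1 power_Suc2)
  ultimately have "[a ^ p = a] (mod p)" by simp
  then have "[int a ^ p = int a] (mod int p)" by (metis cong_int_iff of_nat_power)
  then show ?thesis by (simp add: cong_iff_dvd_diff dvd_diff_commute)
qed

lemma mc_of_int_fermat:
  assumes "prime (p::nat)"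
  shows "mc (int p) ((of_int (int a) :: 'a::comm_ring_1) ^ p) (of_int (int a))"
proof -
  obtain q where "int a ^ p - int a = int p * q" using int_fermat[OF assms, of a] by (auto elim: dvdE)
  then have "(of_int (int a) :: 'a) ^ p - of_int (int a) = of_int (int p) * of_int q"
    by (metis of_int_diff of_int_mult of_int_power)
  then show ?thesis unfolding mc_def by blast
qed


lemma mc_frob4:
  assumes "prime (p::nat)" "odd p"
  shows "mc (int p) ((t + t^a - t^b - t^c) ^ p) (t^p + (t^p)^a - (t^p)^b - (t^p)^c :: 'a::comm_ring_1)"
proof -
  have e: "(t^k)^p = (t^p)^k" for k :: nat by (metis power_mult mult.commute)
  have 1: "mc (int p) ((t + t^a)^p) (t^p + (t^p)^a)" using mc_frob_add[OF assms(1), of t "t^a"] e by simp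
  have 2: "mc (int p) ((t + t^a - t^b)^p) ((t + t^a)^p - (t^p)^b)"
    using mc_frob_diff[OF assms, of "t + t^a" "t^b"] e by simp
  have 3: "mc (int p) ((t + t^a - t^b)^p) (t^p + (t^p)^a - (t^p)^b)"
    using mc_trans[OF 2 mc_diff[OF 1 mc_refl]] .
  have 4: "mc (int p) ((t + t^a - t^b - t^c)^p) ((t + t^a - t^b)^p - (t^p)^c)"
    using mc_frob_diff[OF assms, of "t + t^a - t^b" "t^c"] e by simp
  show ?thesis using mc_trans[OF 4 mc_diff[OF 3 mc_refl]] .
qed

definition "zeta = Z 0 1 0 0"
definition "sq5 = Z (-1) 0 (-2) (-2)"
definition "ww = Z 1 2 0 2"
definition "ww2 = Z 1 2 2 0"

lemma zeta5: "zeta ^ 5 = 1"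
  by (simp add: zeta_def eval_nat_numeral one_zz_def)

lemma zeta_pow_mod: "zeta ^ n = zeta ^ (n mod 5)"
proof -
  have "zeta ^ n = zeta ^ (5 * (n div 5) + n mod 5)" by simp
  also have "\<dots> = (zeta ^ 5) ^ (n div 5) * zeta ^ (n mod 5)"
    by (simp only: power_add power_mult)
  finally show ?thesis by (simp add: zeta5)
qed

lemma sq5_eq: "sq5 = zeta + zeta^4 - zeta^2 - zeta^3"
  by (simp add: zeta_def sq5_def eval_nat_numeral one_zz_def)
lemma ww_eq: "ww = zeta + zeta^3 - zeta^2 - zeta^4"
  by (simp add: zeta_def ww_def eval_nat_numeral one_zz_def)

lemma sig1: "zeta^1 + (zeta^1)^4 - (zeta^1)^2 - (zeta^1)^3 = sq5"
  by (simp add: zeta_def sq5_def eval_nat_numeral one_zz_def)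
lemma sig2: "zeta^2 + (zeta^2)^4 - (zeta^2)^2 - (zeta^2)^3 = - sq5"
  by (simp add: zeta_def sq5_def eval_nat_numeral one_zz_def)
lemma sig3: "zeta^3 + (zeta^3)^4 - (zeta^3)^2 - (zeta^3)^3 = - sq5"
  by (simp add: zeta_def sq5_def eval_nat_numeral one_zz_def)
lemma sig4: "zeta^4 + (zeta^4)^4 - (zeta^4)^2 - (zeta^4)^3 = sq5"
  by (simp add: zeta_def sq5_def eval_nat_numeral one_zz_def)
lemma om2: "zeta^2 + (zeta^2)^3 - (zeta^2)^2 - (zeta^2)^4 = ww2"
  by (simp add: zeta_def ww2_def eval_nat_numeral one_zz_def)
lemma om3: "zeta^3 + (zeta^3)^3 - (zeta^3)^2 - (zeta^3)^4 = - ww2"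
  by (simp add: zeta_def ww2_def eval_nat_numeral one_zz_def)

lemma sq5_sq: "sq5 * sq5 = of_int 5"
  by (simp add: sq5_def of_int_zz)
lemma ww_sq: "ww * ww = - (of_int 5 - of_int 2 * sq5)"
  by (simp add: ww_def sq5_def of_int_zz)
lemma ww2_ww: "ww2 * ww = - sq5"
  by (simp add: ww_def ww2_def sq5_def of_int_zz)
lemma norm_z: "(of_int 5 - of_int 2 * sq5) * (of_int 5 + of_int 2 * sq5) = (of_int 5 :: zz)"
  by (simp add: sq5_def of_int_zz)

lemma mc_Z:
  assumes "mc p (Z a b c d) (Z a' b' c' d')"
  shows "p dvd a - a' \<and> p dvd b - b' \<and> p dvd c - c' \<and> p dvd d - d'"
proof -
  obtain q where "Z a b c d - Z a' b' c' d' = of_int p * q" using assms unfolding mc_def by blast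
  then show ?thesis by (cases q) (simp add: of_int_zz)
qed

lemma sq5_frob:
  assumes "prime (p::nat)" "odd p" "p mod 5 \<noteq> 0"
  shows "mc (int p) (sq5 ^ p) (if p mod 5 = 1 \<or> p mod 5 = 4 then sq5 else - sq5)"
proof -
  have "mc (int p) (sq5 ^ p) (zeta^(p mod 5) + (zeta^(p mod 5))^4 - (zeta^(p mod 5))^2 - (zeta^(p mod 5))^3)"
    using mc_frob4[OF assms(1,2), of zeta 4 2 3] unfolding sq5_eq zeta_pow_mod[of p] .
  moreover have "p mod 5 = 1 \<or> p mod 5 = 2 \<or> p mod 5 = 3 \<or> p mod 5 = 4" using assms(3) by auto
  ultimately show ?thesis using sig1 sig2 sig3 sig4 by auto
qed

lemma ww_frob:
  assumes "prime (p::nat)" "odd p" "p mod 5 = 2 \<or> p mod 5 = 3"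
  shows "mc (int p) (ww ^ p) (if p mod 5 = 2 then ww2 else - ww2)"
proof -
  have "mc (int p) (ww ^ p) (zeta^(p mod 5) + (zeta^(p mod 5))^3 - (zeta^(p mod 5))^2 - (zeta^(p mod 5))^4)"
    using mc_frob4[OF assms(1,2), of zeta 3 2 4] unfolding ww_eq zeta_pow_mod[of p] .
  then show ?thesis using om2 om3 assms(3) by auto
qed


definition Ev :: "int \<Rightarrow> int \<Rightarrow> nat \<Rightarrow> int" where
  "Ev a c h = (\<Sum>n\<le>h. if even n then int (h choose n) * a^(h-n) * c^n * 5^(n div 2) else 0)"
definition Od :: "int \<Rightarrow> int \<Rightarrow> nat \<Rightarrow> int" where
  "Od a c h = (\<Sum>n\<le>h. if odd n then int (h choose n) * a^(h-n) * c^n * 5^(n div 2) else 0)"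

lemma sq5_pow: "sq5 ^ n = of_int (5 ^ (n div 2)) * (if even n then 1 else sq5)"
proof -
  have "sq5 ^ n = sq5 ^ (2 * (n div 2) + n mod 2)" by simp
  also have "\<dots> = (sq5 * sq5) ^ (n div 2) * sq5 ^ (n mod 2)"
    by (simp only: power_add power_mult power2_eq_square)
  also have "\<dots> = of_int (5 ^ (n div 2)) * sq5 ^ (n mod 2)" by (simp add: sq5_sq)
  finally have eq: "sq5 ^ n = of_int (5 ^ (n div 2)) * sq5 ^ (n mod 2)" .
  show ?thesis
  proof (cases "even n")
    case True then have "n mod 2 = 0" by simp
    then show ?thesis using eq True by simp
  next
    case False then have "n mod 2 = 1" by presburger
    then show ?thesis using eq False by simp
  qed
qed

lemma split_pow: "(of_int a + of_int c * sq5) ^ h = of_int (Ev a c h) + of_int (Od a c h) * sq5"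
proof -
  have "(of_int a + of_int c * sq5) ^ h = (of_int c * sq5 + of_int a) ^ h" by (simp add: add.commute)
  also have "\<dots> = (\<Sum>n\<le>h. of_nat (h choose n) * (of_int c * sq5) ^ n * (of_int a) ^ (h - n))"
    by (rule binomial_ring)
  also have "\<dots> = (\<Sum>n\<le>h. of_int (if even n then int (h choose n) * a^(h-n) * c^n * 5^(n div 2) else 0)
        + of_int (if odd n then int (h choose n) * a^(h-n) * c^n * 5^(n div 2) else 0) * sq5)"
  proof (rule sum.cong)
    fix n assume "n \<in> {..h}"
    show "of_nat (h choose n) * (of_int c * sq5) ^ n * (of_int a) ^ (h - n) =
      of_int (if even n then int (h choose n) * a^(h-n) * c^n * 5^(n div 2) else 0)
        + of_int (if odd n then int (h choose n) * a^(h-n) * c^n * 5^(n div 2) else 0) * (sq5::zz)"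
      unfolding power_mult_distrib sq5_pow by (cases "even n") (simp_all add: algebra_simps)
  qed simp
  also have "\<dots> = of_int (Ev a c h) + of_int (Od a c h) * sq5"
    unfolding Ev_def Od_def sum.distrib of_int_sum sum_distrib_right by simp
  finally show ?thesis .
qed

lemma Ev_neg: "Ev a (-c) h = Ev a c h"
  unfolding Ev_def by (rule sum.cong) auto
lemma Od_neg: "Od a (-c) h = - Od a c h"
  unfolding Od_def sum_negf[symmetric] by (rule sum.cong) auto


lemma numeral_zz: "(numeral n :: zz) = Z (numeral n) 0 0 0"
  by (metis of_int_numeral of_int_zz)

lemma mc_of_nat_fermat:
  assumes "prime (p::nat)"
  shows "mc (int p) ((of_nat a :: 'a::comm_ring_1) ^ p) (of_nat a)"
  using mc_of_int_fermat[OF assms, of a] by simp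

lemma cancel_dvd:
  fixes P :: int
  assumes "prime P" "\<not> P dvd c" "P dvd c * x"
  shows "P dvd x"
  using assms prime_dvd_mult_iff by blast

lemma ab_zz: "(of_int a + of_int b * sq5) = Z (a - b) 0 (-2*b) (-2*b)"
  by (simp add: sq5_def of_int_zz)

lemma dvd_eq_subst: "P dvd x \<Longrightarrow> x = y \<Longrightarrow> P dvd y" by simp

lemma mc_unit:
  assumes "mc P (of_int u * a) b" "u * u = 1"
  shows "mc P a (of_int u * b)"
proof -
  have "mc P (of_int u * (of_int u * a)) (of_int u * b)" using mc_mult[OF mc_refl assms(1)] .
  moreover have "of_int u * (of_int u * a) = a"
    by (metis assms(2) mult.assoc mult_1 of_int_1 of_int_mult)
  ultimately show ?thesis by simp
qed

lemma ring_main: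
  fixes p h :: nat
  assumes pr: "prime p" and p: "p = 2 * h + 1" and p5: "p mod 5 \<noteq> 0"
  defines "B \<equiv> Od 5 (-2) h"
  shows "(p mod 5 = 1 \<or> p mod 5 = 4 \<longrightarrow> int p dvd B)
    \<and> (p mod 5 = 2 \<or> p mod 5 = 3 \<longrightarrow> int p dvd 5 ^ h + 1 \<and>
          int p dvd B - (-1) ^ h * (if p mod 5 = 2 then 1 else -1))"
proof -
  define P where "P = int p"
  define A where "A = Ev 5 (-2) h"
  have odd: "odd p" using p by simp
  have PP: "prime P" unfolding P_def using pr by simp
  have P5: "\<not> P dvd 5"
  proof
    assume "P dvd 5"
    then have "p dvd 5" unfolding P_def by presburger
    moreover have "prime (5::nat)" by simp
    ultimately have "p = 5" using primes_dvd_imp_eq pr by blast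
    with p5 show False by simp
  qed
  have P2: "\<not> P dvd 2"
  proof
    assume "P dvd 2"
    then have "p dvd 2" unfolding P_def by presburger
    then have "p \<le> 2" by (simp add: dvd_imp_le)
    with odd pr show False using prime_ge_2_nat[OF pr] by (metis le_antisym even_numeral)
  qed
  define z :: zz where "z = 5 - 2 * sq5"
  define zb :: zz where "zb = 5 + 2 * sq5"
  have zh: "z ^ h = of_int A + of_int B * sq5"
    using split_pow[of 5 "-2" h] unfolding z_def A_def B_def by simp
  have zbh: "zb ^ h = of_int A - of_int B * sq5"
    using split_pow[of 5 "2" h] Ev_neg[of 5 2 h] Od_neg[of 5 2 h]
    unfolding zb_def A_def B_def by simp
  have zzb: "z * zb = 5" unfolding z_def zb_def by (simp add: sq5_def numeral_zz)
  have "(of_int A + of_int B * sq5) * (of_int A - of_int B * sq5) = (z * zb) ^ h"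
    unfolding power_mult_distrib zh zbh ..
  moreover have "(of_int A + of_int B * sq5) * (of_int A - of_int B * sq5) = Z (A*A - 5*B*B) 0 0 0"
    by (simp add: sq5_def of_int_zz algebra_simps)
  moreover have "(z * zb) ^ h = Z (5^h) 0 0 0" unfolding zzb
    by (metis of_int_numeral of_int_power of_int_zz)
  ultimately have "Z (A*A - 5*B*B) 0 0 0 = Z (5^h) 0 0 0" by simp
  then have norm: "A*A - 5*B*B = 5^h" by simp
  have sp: "sq5 ^ p = of_int (5^h) * sq5"
  proof -
    have "sq5 ^ p = (sq5 * sq5) ^ h * sq5" unfolding p by (simp add: power_add power_mult power2_eq_square)
    then show ?thesis by (simp add: sq5_sq)
  qed
  have sfrob: "mc P (of_int (5^h) * sq5) (if p mod 5 = 1 \<or> p mod 5 = 4 then sq5 else - sq5)"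
    using sq5_frob[OF pr odd p5] unfolding sp P_def .
  have 5: "P dvd 5^h - (if p mod 5 = 1 \<or> p mod 5 = 4 then 1 else -1)"
  proof -
    have "mc P (of_int (5^h) * sq5 * sq5) ((if p mod 5 = 1 \<or> p mod 5 = 4 then sq5 else - sq5) * sq5)"
      using mc_mult[OF sfrob mc_refl] .
    then have "mc P (Z (5^h * 5) 0 0 0) (Z (if p mod 5 = 1 \<or> p mod 5 = 4 then 5 else -5) 0 0 0)"
      by (cases "p mod 5 = 1 \<or> p mod 5 = 4") (simp_all add: sq5_sq mult.assoc of_int_zz numeral_zz)
    then have "P dvd 5^h * 5 - (if p mod 5 = 1 \<or> p mod 5 = 4 then 5 else -5)" using mc_Z by blast
    moreover have "5^h * 5 - (if p mod 5 = 1 \<or> p mod 5 = 4 then 5 else -5) = 5 * (5^h - (if p mod 5 = 1 \<or> p mod 5 = 4 then 1 else -1::int))"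
      by (simp add: algebra_simps)
    ultimately have "P dvd 5 * (5^h - (if p mod 5 = 1 \<or> p mod 5 = 4 then 1 else -1))"
      by metis
    then show ?thesis using cancel_dvd[OF PP P5] by blast
  qed
  have f5: "mc P ((5::zz)^p) 5" using mc_of_nat_fermat[OF pr, of 5] unfolding P_def by simp
  have f2: "mc P ((2::zz)^p) 2" using mc_of_nat_fermat[OF pr, of 2] unfolding P_def by simp
  have zhz: "z ^ h * z = Z ((5*A - 10*B) - (5*B - 2*A)) 0 (-2*(5*B - 2*A)) (-2*(5*B - 2*A))"
  proof -
    have "z ^ h * z = (of_int A + of_int B * sq5) * z" by (simp add: zh)
    also have "\<dots> = Z ((5*A - 10*B) - (5*B - 2*A)) 0 (-2*(5*B - 2*A)) (-2*(5*B - 2*A))"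
      unfolding z_def ab_zz by (simp add: numeral_zz sq5_def algebra_simps)
    finally show ?thesis .
  qed
  have c1: "P dvd B" if c: "p mod 5 = 1 \<or> p mod 5 = 4"
  proof -
    have s1: "mc P (sq5^p) sq5" using sq5_frob[OF pr odd p5] c unfolding P_def by auto
    have "mc P (z^p) ((5::zz)^p - (2*sq5)^p)" using mc_frob_diff[OF pr odd] unfolding z_def P_def .
    moreover have "mc P ((5::zz)^p - (2*sq5)^p) (5 - 2*sq5)"
      unfolding power_mult_distrib by (rule mc_diff[OF f5 mc_mult[OF f2 s1]])
    ultimately have "mc P (z^p) z" unfolding z_def using mc_trans by blast
    moreover have "z^p = z^h * z^h * z" unfolding p by (simp only: mult_2 power_add power_one_right)
    ultimately have "mc P (z^h * z^h * z * zb) (z * zb)" using mc_mult[OF _ mc_refl] by metis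
    then have "mc P (z^h * z^h * 5) 5" by (simp add: mult.assoc zzb)
    moreover have "z^h * z^h * 5 = Z (5*(A*A+5*B*B-2*A*B)) 0 (-20*A*B) (-20*A*B)"
      unfolding zh ab_zz by (simp add: numeral_zz algebra_simps)
    ultimately have "mc P (Z (5*(A*A+5*B*B-2*A*B)) 0 (-20*A*B) (-20*A*B)) (Z 5 0 0 0)"
      by (simp add: numeral_zz)
    from mc_Z[OF this] have d1: "P dvd 5*(A*A+5*B*B-2*A*B) - 5" and d2: "P dvd -20*A*B" by auto
    have "-20*A*B = 2*(2*(5*(-(A*B))))" by simp
    with d2 have "P dvd 2*(2*(5*(-(A*B))))" by (rule dvd_eq_subst)
    then have "P dvd 5*(-(A*B))" using cancel_dvd[OF PP P2] by blast
    then have "P dvd -(A*B)" using cancel_dvd[OF PP P5] by blast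
    then have dAB: "P dvd A*B" by (simp only: dvd_minus_iff)
    have "P dvd 10*(A*B)" using dAB by (rule dvd_mult)
    with d1 have "P dvd 5*(A*A+5*B*B-2*A*B) - 5 + 10*(A*B)" by (rule dvd_add)
    moreover have "5*(A*A+5*B*B-2*A*B) - 5 + 10*(A*B) = 5*(A*A+5*B*B-1)" by (simp add: algebra_simps)
    ultimately have "P dvd 5*(A*A+5*B*B-1)" by (rule dvd_eq_subst)
    then have e1: "P dvd A*A+5*B*B-1" using cancel_dvd[OF PP P5] by blast
    have e2: "P dvd A*A - 5*B*B - 1" using 5 c norm by auto
    have "P dvd (A*A+5*B*B-1) - (A*A - 5*B*B - 1)" using e1 e2 by (rule dvd_diff)
    moreover have "(A*A+5*B*B-1) - (A*A - 5*B*B - 1) = 2*(5*(B*B))" by simp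
    ultimately have "P dvd 2*(5*(B*B))" by (rule dvd_eq_subst)
    then have "P dvd 5*(B*B)" using cancel_dvd[OF PP P2] by blast
    then have "P dvd B*B" using cancel_dvd[OF PP P5] by blast
    then show ?thesis using PP prime_dvd_mult_iff by blast
  qed
  have c2: "P dvd B - (-1) ^ h * (if p mod 5 = 2 then 1 else -1)" if c: "p mod 5 = 2 \<or> p mod 5 = 3"
  proof -
    define d :: int where "d = (if p mod 5 = 2 then 1 else -1)"
    have wf: "mc P (ww^p) (of_int d * ww2)" using ww_frob[OF pr odd c] unfolding d_def P_def
      by (cases "p mod 5 = 2") auto
    have "mc P (ww^p * ww) (of_int d * ww2 * ww)" using mc_mult[OF wf mc_refl] .
    moreover have "ww^p * ww = (ww * ww)^(h+1)"
    proof -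
      have "ww^p * ww = ww^(Suc p)" by (simp only: power_Suc2)
      also have "Suc p = 2 * (h+1)" unfolding p by simp
      also have "ww^(2 * (h+1)) = (ww^2)^(h+1)" by (simp only: power_mult)
      finally show ?thesis by (simp only: power2_eq_square)
    qed
    moreover have "ww * ww = - z" unfolding z_def using ww_sq by simp
    moreover have "(- z)^(h+1) = of_int ((-1)^(h+1)) * (z^h * z)"
    proof -
      have "(- z)^(h+1) = (-1)^(h+1) * z^(h+1)" by (rule power_minus)
      also have "z^(h+1) = z^h * z" by (simp only: Suc_eq_plus1[symmetric] power_Suc2)
      finally show ?thesis by simp
    qed
    moreover have "of_int d * ww2 * ww = of_int (- d) * sq5" using ww2_ww by (simp add: mult.assoc)
    ultimately have "mc P (of_int ((-1)^(h+1)) * (z^h * z)) (of_int (- d) * sq5)" by simp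
    from mc_unit[OF this] have "mc P (z^h * z) (of_int ((-1)^(h+1)) * (of_int (- d) * sq5))"
      by (simp add: power_mult_distrib[symmetric])
    moreover have "of_int ((-1)^(h+1)) * (of_int (- d) * sq5) = of_int ((-1)^h * d) * sq5" by simp
    ultimately have "mc P (z^h * z) (of_int ((-1)^h * d) * sq5)" by (simp add: mult.assoc)
    then have "mc P (Z ((5*A - 10*B) - (5*B - 2*A)) 0 (-2*(5*B - 2*A)) (-2*(5*B - 2*A)))
       (Z (- ((-1)^h * d)) 0 (-2*((-1)^h * d)) (-2*((-1)^h * d)))"
      unfolding zhz by (simp add: sq5_def of_int_zz mult.commute)
    from mc_Z[OF this] have d1: "P dvd (5*A - 10*B) - (5*B - 2*A) - (- ((-1)^h * d))"
      and d2: "P dvd (-2*(5*B - 2*A)) - (-2*((-1)^h * d))" by auto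
    have "(-2*(5*B - 2*A)) - (-2*((-1)^h * d)) = 2 * (-(5*B - 2*A - (-1)^h * d))" by simp
    with d2 have "P dvd 2 * (-(5*B - 2*A - (-1)^h * d))" by (rule dvd_eq_subst)
    then have "P dvd (-(5*B - 2*A - (-1)^h * d))" using cancel_dvd[OF PP P2] by blast
    then have d3: "P dvd 5*B - 2*A - (-1)^h * d" by (simp only: dvd_minus_iff)
    have "P dvd ((5*A - 10*B) - (5*B - 2*A) - (- ((-1)^h * d))) + (5*B - 2*A - (-1)^h * d)"
      using d1 d3 by (rule dvd_add)
    moreover have "((5*A - 10*B) - (5*B - 2*A) - (- ((-1)^h * d))) + (5*B - 2*A - (-1)^h * d) = 5 * (A - 2*B)"
      by simp
    ultimately have "P dvd 5 * (A - 2*B)" by (rule dvd_eq_subst)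
    then have "P dvd A - 2*B" using cancel_dvd[OF PP P5] by blast
    then have "P dvd 2 * (A - 2*B)" by (rule dvd_mult)
    with d3 have "P dvd (5*B - 2*A - (-1)^h * d) + 2 * (A - 2*B)" by (rule dvd_add)
    moreover have "(5*B - 2*A - (-1)^h * d) + 2 * (A - 2*B) = B - (-1)^h * d" by simp
    ultimately show ?thesis unfolding d_def by (rule dvd_eq_subst)
  qed
  show ?thesis using c1 5 c2 unfolding P_def by auto
qed



lemma binom_rec1: "Suc n * (2 * Suc n choose Suc n) = 2 * (2 * n + 1) * (2 * n choose n)"
  by (metis Suc_eq_plus1 Suc_times_binomial Suc_times_binomial_add add_Suc
    add_Suc_right mult.assoc mult_2)
lemma binom_rec2: "n < h \<Longrightarrow> Suc n * (h choose Suc n) = (h - n) * (h choose n)"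
  using binomial_absorb_comp binomial_absorption by presburger

lemma central_cong:
  fixes p h :: nat
  assumes pr: "prime p" and p: "p = 2 * h + 1"
  shows "n \<le> h \<Longrightarrow> int p dvd int (2 * n choose n) - int (h choose n) * (-4)^n"
proof (induction n)
  case 0
  then show ?case by simp
next
  case (Suc n)
  define P where "P = int p"
  define L where "L = int (2 * n choose n)"
  define R where "R = int (h choose n) * (-4)^n"
  have nh: "n < h" using Suc.prems by simp
  have IH: "P dvd L - R" using Suc nh unfolding P_def L_def R_def by simp
  define X where "X = int (2 * Suc n choose Suc n)"
  define Y where "Y = int (h choose Suc n)"
  define C where "C = int (h choose n)"
  have e1: "int (Suc n) * X = 2 * (2 * int n + 1) * L"
  proof -
    have "int (Suc n) * X = int (Suc n * (2*Suc n choose Suc n))" unfolding X_def by (simp only: of_nat_mult)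
    also have "\<dots> = int (2 * (2 * n + 1) * (2 * n choose n))" by (simp only: binom_rec1)
    also have "\<dots> = 2 * (2 * int n + 1) * L" unfolding L_def by (simp only: of_nat_mult of_nat_add of_nat_numeral of_nat_1)
    finally show ?thesis .
  qed
  have e2: "int (Suc n) * Y = (int h - int n) * C"
  proof -
    have "int (Suc n) * Y = int (Suc n * (h choose Suc n))" unfolding Y_def by (simp only: of_nat_mult)
    also have "\<dots> = int ((h - n) * (h choose n))" by (simp only: binom_rec2[OF nh])
    also have "\<dots> = (int h - int n) * C" unfolding C_def using nh by (simp add: of_nat_diff)
    finally show ?thesis .
  qed
  have "int (Suc n) * (X - Y * (-4)^(Suc n)) = int (Suc n) * X - (int (Suc n) * Y) * (-4)^(Suc n)"
    by (simp add: algebra_simps)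
  also have "\<dots> = 2 * (2 * int n + 1) * L - (int h - int n) * C * (-4)^(Suc n)"
    by (simp only: e1 e2)
  also have "\<dots> = 2 * (2 * int n + 1) * (L - R) + P * (2 * R)"
    unfolding R_def P_def p C_def by (simp add: algebra_simps)
  finally have eq: "int (Suc n) * (X - Y * (-4)^(Suc n))
      = 2 * (2 * int n + 1) * (L - R) + P * (2 * R)" .
  have "P dvd 2 * (2 * int n + 1) * (L - R) + P * (2 * R)"
    using IH by (simp add: dvd_add)
  then have d: "P dvd int (Suc n) * (X - Y * (-4)^(Suc n))"
    unfolding eq .
  have PP: "prime P" unfolding P_def using pr by simp
  have "\<not> P dvd int (Suc n)"
  proof
    assume "P dvd int (Suc n)"
    then have "p dvd Suc n" unfolding P_def by presburger
    then have "p \<le> Suc n" by (simp add: dvd_imp_le)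
    with Suc.prems p show False by simp
  qed
  then have "P dvd X - Y * (-4)^(Suc n)" using d PP prime_dvd_mult_iff by blast
  then show ?case unfolding P_def X_def Y_def .
qed

lemma pow_id:
  fixes h K k :: nat
  assumes "1 \<le> k" "k \<le> K" "2 * k - 1 \<le> h" "K \<le> h"
  shows "(2::int) * 5^(h-K) * 4^(2*k-1) * 20^(K-k) = 4^K * 5^(h-(2*k-1)) * 2^(2*k-1) * 5^(k-1)"
proof -
  have f4: "(4::int)^n = 2^(2*n)" for n by (simp add: power_mult)
  have f20: "(20::int)^n = 2^(2*n) * 5^n" for n
    by (simp add: power_mult power_mult_distrib[symmetric])
  have e1: "1 + 2*(2*k-1) + 2*(K-k) = 2*K + (2*k-1)" using assms by simp
  have e2: "(h-K) + (K-k) = (h-(2*k-1)) + (k-1)" using assms by simp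
  have "(2::int) * 5^(h-K) * 4^(2*k-1) * 20^(K-k) = 2^(1 + 2*(2*k-1) + 2*(K-k)) * 5^((h-K) + (K-k))"
    unfolding f4 f20 power_add by (simp add: algebra_simps)
  also have "\<dots> = 2^(2*K + (2*k-1)) * 5^((h-(2*k-1)) + (k-1))" unfolding e1 e2 ..
  also have "\<dots> = 4^K * 5^(h-(2*k-1)) * 2^(2*k-1) * 5^(k-1)"
    unfolding f4 power_add by (simp add: algebra_simps)
  finally show ?thesis .
qed


lemma int_main:
  fixes p h K :: nat
  assumes pr: "prime p" and p: "p = 2 * h + 1" and h1: "1 \<le> h" and K: "K = (h + 1) div 2"
  shows "int p dvd 2 * 5^(h-K) * (\<Sum>k=1..K. int ((4*k - 2) choose (2*k - 1)) * 20^(K-k)) - 4^K * Od 5 (-2) h"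
proof -
  define g where "g n = int (h choose n) * 5^(h-n) * (-2)^n * 5^(n div 2)" for n
  have SE: "{n\<in>{..h}. odd n} = (\<lambda>k. 2*k - 1) ` {1..K}"
  proof (intro Set.set_eqI iffI)
    fix n assume "n \<in> {n\<in>{..h}. odd n}"
    then have "n \<le> h" "odd n" by auto
    then have "n = 2 * ((n+1) div 2) - 1" "(n+1) div 2 \<in> {1..K}" using K by (auto elim!: oddE)
    then show "n \<in> (\<lambda>k. 2*k - 1) ` {1..K}" by blast
  next
    fix n assume "n \<in> (\<lambda>k. 2*k - 1) ` {1..K}"
    then obtain k where "k \<in> {1..K}" "n = 2*k - 1" by blast
    then show "n \<in> {n\<in>{..h}. odd n}" using K by auto
  qed
  have "Od 5 (-2) h = (\<Sum>n\<in>{n\<in>{..h}. odd n}. g n)"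
    unfolding Od_def g_def sum.inter_filter[OF finite_atMost] ..
  also have "\<dots> = sum g ((\<lambda>k. 2*k - 1) ` {1..K})" unfolding SE ..
  also have "sum g ((\<lambda>k. 2*k - 1) ` {1..K}) = (\<Sum>k=1..K. g (2*k - 1))"
    by (subst sum.reindex) (auto simp: inj_on_def)
  finally have B: "Od 5 (-2) h = (\<Sum>k=1..K. g (2*k - 1))" .
  have "2 * 5^(h-K) * (\<Sum>k=1..K. int ((4*k - 2) choose (2*k - 1)) * 20^(K-k)) - 4^K * Od 5 (-2) h
     = (\<Sum>k=1..K. 2 * 5^(h-K) * (int ((4*k - 2) choose (2*k - 1)) * 20^(K-k)) - 4^K * g (2*k - 1))"
    unfolding B sum_distrib_left sum_subtractf ..
  also have "int p dvd \<dots>"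
  proof (rule dvd_sum)
    fix k assume k: "k \<in> {1..K}"
    define n where "n = 2*k - 1"
    have n: "odd n" "n \<le> h" "n div 2 = k - 1" "4*k - 2 = 2 * n" using k K unfolding n_def by auto
    have kc: "1 \<le> k" "k \<le> K" "2 * k - 1 \<le> h" "K \<le> h" using k K by auto
    have cc: "int p dvd int (2 * n choose n) - int (h choose n) * (-4)^n"
      using central_cong[OF pr p n(2)] .
    have pid: "(2::int) * 5^(h-K) * 4^n * 20^(K-k) = 4^K * 5^(h-n) * 2^n * 5^(k-1)"
      using pow_id[OF kc] unfolding n_def .
    have "2 * 5^(h-K) * (int ((4*k - 2) choose (2*k - 1)) * 20^(K-k)) - 4^K * g (2*k - 1)
       = 2 * 5^(h-K) * 20^(K-k) * (int (2 * n choose n) - int (h choose n) * (-4)^n)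
         + int (h choose n) * (- (2 * 5^(h-K) * 4^n * 20^(K-k)) + 4^K * 5^(h-n) * 2^n * 5^(k-1))"
      unfolding g_def n_def[symmetric] n(4) n(3) using n(1)
      by (simp add: power_minus_odd algebra_simps)
    also have "\<dots> = 2 * 5^(h-K) * 20^(K-k) * (int (2 * n choose n) - int (h choose n) * (-4)^n)"
      unfolding pid by simp
    finally show "int p dvd 2 * 5^(h-K) * (int ((4*k - 2) choose (2*k - 1)) * 20^(K-k)) - 4^K * g (2*k - 1)"
      using cc by simp
  qed
  finally show ?thesis .
qed


lemma S_eq:
  "(\<Sum>k = 1..K. of_nat ((4*k - 2) choose (2*k - 1)) / (20::rat) ^ k)
    = of_int (\<Sum>k=1..K. int ((4*k - 2) choose (2*k - 1)) * 20^(K-k)) / 20^K"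
proof -
  have "of_int (\<Sum>k=1..K. int ((4*k - 2) choose (2*k - 1)) * 20^(K-k)) / (20::rat)^K
     = (\<Sum>k=1..K. of_nat ((4*k - 2) choose (2*k - 1)) * 20^(K-k) / 20^K)"
    by (simp add: sum_divide_distrib)
  also have "\<dots> = (\<Sum>k = 1..K. of_nat ((4*k - 2) choose (2*k - 1)) / (20::rat) ^ k)"
  proof (rule sum.cong)
    fix k assume "k \<in> {1..K}"
    then have "(20::rat)^K = 20^(K-k) * 20^k" by (simp add: power_add[symmetric])
    then show "of_nat ((4*k - 2) choose (2*k - 1)) * 20^(K-k) / 20^K = of_nat ((4*k - 2) choose (2*k - 1)) / (20::rat) ^ k"
      by simp
  qed simp
  finally show ?thesis by simp
qed

lemma rat_final:
  fixes P T e :: int and K :: nat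
  assumes PP: "prime P" and P2: "\<not> P dvd 2" and P5: "\<not> P dvd 5" and d: "P dvd 2 * T - e * 20^K"
  shows "rat_cong (of_int T / 20^K) (of_int e / 2) P"
  unfolding rat_cong_def
proof (intro exI conjI)
  show "(2 * 20^K :: int) \<noteq> 0" by simp
  have c2: "coprime 2 P" using prime_imp_coprime[OF PP P2] by (rule coprime_commute[THEN iffD1])
  have c5: "coprime 5 P" using prime_imp_coprime[OF PP P5] by (rule coprime_commute[THEN iffD1])
  have "coprime (2 * (2 * 5)) P" using c2 c5 by (simp only: coprime_mult_left_iff)
  then have c20: "coprime (20::int) P" by simp
  then have "coprime ((20::int)^K) P" by simp
  then show "coprime (2 * 20^K :: int) P" using c2 by (simp only: coprime_mult_left_iff)
  show "P dvd 2 * T - e * 20^K" by (rule d)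
  show "of_int T / 20 ^ K - of_int e / 2 = (of_int (2 * T - e * 20 ^ K) :: rat) / of_int (2 * 20 ^ K)"
    by (simp add: field_simps)
qed


theorem corollary3p7:
  fixes p :: nat
  assumes "prime p" and "odd p" and "p \<noteq> 5"
  defines "S \<equiv> (\<Sum>k = 1..(p + 1) div 4. of_nat ((4*k - 2) choose (2*k - 1)) / (20::rat) ^ k)"
  shows "([p = 1] (mod 5) \<or> [p = 4] (mod 5) \<longrightarrow> rat_cong S 0 (int p))
       \<and> ([p = 2] (mod 5) \<longrightarrow> rat_cong S (- ((-1) ^ ((p - 1) div 2) / 2)) (int p))
       \<and> ([p = 3] (mod 5) \<longrightarrow> rat_cong S ((-1) ^ ((p - 1) div 2) / 2) (int p))"
proof -
  note pr = assms(1)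
  define h where "h = (p - 1) div 2"
  define K where "K = (p + 1) div 4"
  define P where "P = int p"
  define B where "B = Od 5 (-2) h"
  define T where "T = (\<Sum>k=1..K. int ((4*k - 2) choose (2*k - 1)) * 20^(K-k))"
  have p2: "p \<ge> 2" using prime_ge_2_nat[OF pr] .
  have p: "p = 2 * h + 1" unfolding h_def using assms(2) by presburger
  have h1: "1 \<le> h" using p p2 assms(2) by (cases h) auto
  have K': "K = (h + 1) div 2" unfolding K_def using p by presburger
  have Kh: "K \<le> h" using K' h1 by simp
  have p5: "p mod 5 \<noteq> 0"
  proof
    assume "p mod 5 = 0"
    then have "5 dvd p" by auto
    moreover have "prime (5::nat)" by simp
    ultimately have "5 = p" using primes_dvd_imp_eq pr by blast
    with assms(3) show False by simp
  qed
  have PP: "prime P" unfolding P_def using pr by simp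
  have P5: "\<not> P dvd 5"
  proof
    assume "P dvd 5"
    then have "p dvd 5" unfolding P_def by presburger
    moreover have "prime (5::nat)" by simp
    ultimately have "p = 5" using primes_dvd_imp_eq pr by blast
    with assms(3) show False by simp
  qed
  have P2: "\<not> P dvd 2"
  proof
    assume "P dvd 2"
    then have "p dvd 2" unfolding P_def by presburger
    then have "p \<le> 2" by (simp add: dvd_imp_le)
    with p2 have "p = 2" by simp
    with assms(2) show False by simp
  qed
  have SE: "S = of_int T / 20^K" unfolding S_def T_def K_def by (rule S_eq)
  have IM: "P dvd 2 * 5^(h-K) * T - 4^K * B"
    using int_main[OF pr p h1 K'] unfolding P_def T_def B_def .
  have RM: "(p mod 5 = 1 \<or> p mod 5 = 4 \<longrightarrow> P dvd B)
    \<and> (p mod 5 = 2 \<or> p mod 5 = 3 \<longrightarrow> P dvd 5 ^ h + 1 \<and>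
          P dvd B - (-1) ^ h * (if p mod 5 = 2 then 1 else -1))"
    using ring_main[OF pr p p5] unfolding P_def B_def .
  have key: "rat_cong S (of_int e / 2) P" if de: "P dvd B - e * 5^h" for e :: int
  proof -
    have "(5::int)^(h-K) * 20^K = 4^K * 5^h"
    proof -
      have "(20::int)^K = 4^K * 5^K" by (simp add: power_mult_distrib[symmetric])
      moreover have "(5::int)^(h-K) * 5^K = 5^h" using Kh by (simp add: power_add[symmetric])
      ultimately show ?thesis by (simp add: algebra_simps)
    qed
    then have "5^(h-K) * (2 * T - e * 20^K) = (2 * 5^(h-K) * T - 4^K * B) + 4^K * (B - e * 5^h)"
      by (simp add: algebra_simps)
    moreover have "P dvd (2 * 5^(h-K) * T - 4^K * B) + 4^K * (B - e * 5^h)"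
      using IM de by (simp add: dvd_add)
    ultimately have "P dvd 5^(h-K) * (2 * T - e * 20^K)" by simp
    moreover have "\<not> P dvd 5^(h-K)" using P5 PP prime_dvd_power by blast
    ultimately have "P dvd 2 * T - e * 20^K" using PP prime_dvd_mult_iff by blast
    then show ?thesis unfolding SE using rat_final[OF PP P2 P5] by blast
  qed
  have cg: "[p = a] (mod 5) \<longleftrightarrow> p mod 5 = a" if "a < 5" for a using that by (simp add: cong_def)
  have r1: "rat_cong S 0 (int p)" if "p mod 5 = 1 \<or> p mod 5 = 4"
    using key[of 0] RM that unfolding P_def by auto
  have r2: "rat_cong S (- ((-1) ^ ((p - 1) div 2) / 2)) (int p)" if c: "p mod 5 = 2"
  proof -
    have "P dvd (B - (-1)^h) + (-1)^h * (5^h + 1)" using RM c by (simp add: dvd_add)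
    moreover have "(B - (-1)^h) + (-1)^h * (5^h + 1) = B - (- ((-1)^h)) * 5^h" by (simp add: algebra_simps)
    ultimately have "P dvd B - (- ((-1)^h)) * 5^h" by (rule dvd_eq_subst)
    from key[OF this] show ?thesis unfolding P_def h_def by simp
  qed
  have r3: "rat_cong S ((-1) ^ ((p - 1) div 2) / 2) (int p)" if c: "p mod 5 = 3"
  proof -
    have "P dvd (B - (-1)^h * (-1)) - (-1)^h * (5^h + 1)" using RM c by (simp add: dvd_diff)
    moreover have "(B - (-1)^h * (-1)) - (-1)^h * (5^h + 1) = B - (-1)^h * 5^h" by (simp add: algebra_simps)
    ultimately have "P dvd B - (-1)^h * 5^h" by (rule dvd_eq_subst)
    from key[OF this] show ?thesis unfolding P_def h_def by simp
  qed
  show ?thesis using r1 r2 r3 cg by auto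
qed

end
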